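(* Let $f$ be a complex polynomial of degree $d$ with $f(0)\neq 0$, with roots $\zeta_1,\dots,\zeta_d$ (counted with multiplicity) ordered so that $|\zeta_1|\le\cdots\le|\zeta_d|$, and assume not all roots have the same modulus. Let $\rho=\min\{|\zeta_{i+1}|/|\zeta_i| : |\zeta_{i+1}|>|\zeta_i|\}$. Let $N$ be a positive integer with \[ N > 3+\log_2\frac{d\log 2}{\log\rho}, \] let $g=G^Nf=\sum_{i=0}^d g_ix^i$ and $r_i=-2^{-N}\log|g_i|\in\mathbb{R}\cup\{+\infty\}$ for $i=0,\dots,d$. Then the Strict Convex Hull procedure (described in the context) with input $N,d,r=(r_0,\dots,r_d),\rho$ returns exactly the increasing list of the elements of \[ I=\{0,d\}\cup\{i : 1\le i\le d-1,\ |\zeta_i|<|\zeta_{i+1}|\}, \] i.e. the abscissae of the sharp corners of the convex piecewise linear function on $[0,d]$ interpolating $i\mapsto\sum_{j\le i}\log|\zeta_j|$.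
   Context: $\log$ is the natural logarithm. The Graeffe operator maps a degree $d$ polynomial $f$ to $Gf(x)=(-1)^d f(\sqrt{x})f(-\sqrt{x})$, again a degree $d$ polynomial (whose roots are the squares of those of $f$); $G^N$ is its $N$-th iterate. Usual conventions for $+\infty$ are used in comparisons and arithmetic. Strict Convex Hull procedure, input $N,d,r_0,\dots,r_d,\rho$: set $R=\rho^{2^N}$ and \[ E=\tfrac12\Big(2^{-N+1}\log(2^d+2^dR^{-1})-2^{-N+2}\log(1-2^dR^{-1})+\tfrac{\log\rho}{2}\Big). \] Initialize a list with $\Lambda_0=0$ and $j=0$. For $i=1,2,\dots,d$ in turn: while $j>0$ and \[ \frac{r_{\Lambda_j}-r_{\Lambda_{j-1}}}{\Lambda_j-\Lambda_{j-1}} > \frac{r_i-r_{\Lambda_j}}{i-\Lambda_j}-E, \] set $j\leftarrow j-1$ (discarding $\Lambda_j$); then set $j\leftarrow j+1$ and $\Lambda_j\leftarrow i$. After the loop, return $(\Lambda_0,\dots,\Lambda_j)$. *)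

theory Defs
  imports "HOL-Computational_Algebra.Polynomial" "HOL-Library.Extended_Real"
begin

(* Graeffe operator: G f is the (unique) polynomial with (G f)(x^2) = (-1)^d f(x) f(-x),
   i.e. G f (x) = (-1)^d f(sqrt x) f(-sqrt x). *)
definition graeffe :: "complex poly \<Rightarrow> complex poly" where
  "graeffe f = (THE g. pcompose g [:0, 0, 1:] =
                  smult ((-1) ^ degree f) (f * pcompose f [:0, -1:]))"

(* Inner "while" loop of the Strict Convex Hull procedure.  The stack is stored
   reversed: the head is Lambda_j, the next element Lambda_{j-1}; "j > 0" means
   the stack has at least two elements. *)
fun sch_pop :: "real \<Rightarrow> (nat \<Rightarrow> ereal) \<Rightarrow> nat \<Rightarrow> nat list \<Rightarrow> nat list" where
  "sch_pop E r i (a # b # rest) =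
     (if (r a - r b) / ereal (real a - real b) > (r i - r a) / ereal (real i - real a) - ereal E
      then sch_pop E r i (b # rest) else a # b # rest)"
| "sch_pop E r i st = st"

definition sch_E :: "nat \<Rightarrow> nat \<Rightarrow> real \<Rightarrow> real" where
  "sch_E N d \<rho> = (let R = \<rho> ^ (2 ^ N) in
     (1/2) * (2 powr (1 - real N) * ln (2 ^ d + 2 ^ d / R)
              - 2 powr (2 - real N) * ln (1 - 2 ^ d / R) + ln \<rho> / 2))"

definition strict_convex_hull :: "nat \<Rightarrow> nat \<Rightarrow> (nat \<Rightarrow> ereal) \<Rightarrow> real \<Rightarrow> nat list" where
  "strict_convex_hull N d r \<rho> =
     rev (foldl (\<lambda>st i. i # sch_pop (sch_E N d \<rho>) r i st) [0] [1..<d+1])"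

end

theory Submission
  imports Defs
begin



lemma poly_sq_pcompose: "poly (pcompose g [:0, 0, 1:]) (x::complex) = poly g (x^2)"
proof -
  have "poly [:0, 0, 1:] x = x^2" by (simp add: power2_eq_square)
  then show ?thesis by (simp add: poly_pcompose)
qed

lemma pcompose_sq_inj:
  fixes g h :: "complex poly"
  assumes "pcompose g [:0, 0, 1:] = pcompose h [:0, 0, 1:]" shows "g = h"
proof -
  have "poly g y = poly h y" for y
  proof -
    have "poly g ((csqrt y)^2) = poly h ((csqrt y)^2)"
      using arg_cong[OF assms, of "\<lambda>p. poly p (csqrt y)"] by (simp add: poly_sq_pcompose)
    then show ?thesis by simp
  qed
  then show ?thesis using poly_eq_poly_eq_iff by blast
qed

lemma degree_lin_prod:
  fixes z :: "'a \<Rightarrow> complex"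
  assumes "finite A" "a \<noteq> 0"
  shows "degree (smult a (\<Prod>i\<in>A. [:- z i, 1:])) = card A"
  using assms by (simp add: degree_prod_sum_eq)

lemma graeffe_prod:
  fixes z :: "'a \<Rightarrow> complex"
  assumes fin: "finite A" and a: "a \<noteq> 0"
  shows "graeffe (smult a (\<Prod>i\<in>A. [:- z i, 1:])) = smult (a^2) (\<Prod>i\<in>A. [:- ((z i)^2), 1:])"
proof -
  define f where "f = smult a (\<Prod>i\<in>A. [:- z i, 1:])"
  define g0 where "g0 = smult (a^2) (\<Prod>i\<in>A. [:- ((z i)^2), 1:])"
  have df: "degree f = card A" unfolding f_def using degree_lin_prod[OF fin a] .
  have key: "pcompose g0 [:0, 0, 1:] = smult ((-1) ^ degree f) (f * pcompose f [:0, -1:])"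
  proof -
    have "poly (pcompose g0 [:0, 0, 1:]) x = poly (smult ((-1) ^ degree f) (f * pcompose f [:0, -1:])) x" for x
    proof -
      have "poly (pcompose g0 [:0, 0, 1:]) x = a^2 * (\<Prod>i\<in>A. x^2 - (z i)^2)"
        unfolding g0_def by (simp add: poly_sq_pcompose poly_prod)
      also have "\<dots> = a^2 * (\<Prod>i\<in>A. (-1) * ((x - z i) * (- z i - x)))"
        by (intro arg_cong[where f="\<lambda>t. a^2 * t"] prod.cong) (simp_all add: algebra_simps power2_eq_square)
      also have "\<dots> = (-1) ^ card A * ((a * (\<Prod>i\<in>A. x - z i)) * (a * (\<Prod>i\<in>A. - z i - x)))"
      proof -
        have "(\<Prod>i\<in>A. (-1) * ((x - z i) * (- z i - x))) = (\<Prod>i\<in>A. (-1::complex)) * ((\<Prod>i\<in>A. x - z i) * (\<Prod>i\<in>A. - z i - x))"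
          by (simp only: prod.distrib)
        then show ?thesis by (simp add: power2_eq_square algebra_simps)
      qed
      also have "\<dots> = poly (smult ((-1) ^ degree f) (f * pcompose f [:0, -1:])) x"
        unfolding df unfolding f_def by (simp add: poly_pcompose poly_prod)
      finally show ?thesis .
    qed
    then show ?thesis using poly_eq_poly_eq_iff by blast
  qed
  have "graeffe f = g0"
    unfolding graeffe_def
  proof (rule the_equality)
    show "pcompose g0 [:0, 0, 1:] = smult ((-1) ^ degree f) (f * pcompose f [:0, -1:])" by (rule key)
  next
    fix g assume "pcompose g [:0, 0, 1:] = smult ((-1) ^ degree f) (f * pcompose f [:0, -1:])"
    then show "g = g0" using key pcompose_sq_inj by simp
  qed
  then show ?thesis unfolding f_def g0_def .
qed

lemma graeffe_iter:
  fixes z :: "'a \<Rightarrow> complex"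
  assumes fin: "finite A" and a: "a \<noteq> 0"
  shows "(graeffe ^^ N) (smult a (\<Prod>i\<in>A. [:- z i, 1:])) = smult (a^(2^N)) (\<Prod>i\<in>A. [:- ((z i)^(2^N)), 1:])"
proof (induction N)
  case 0 then show ?case by simp
next
  case (Suc N)
  have "(graeffe ^^ Suc N) (smult a (\<Prod>i\<in>A. [:- z i, 1:])) = graeffe (smult (a^(2^N)) (\<Prod>i\<in>A. [:- ((z i)^(2^N)), 1:]))"
    using Suc by simp
  also have "\<dots> = smult ((a^(2^N))^2) (\<Prod>i\<in>A. [:- (((z i)^(2^N))^2), 1:])"
    by (rule graeffe_prod[OF fin]) (use a in simp)
  also have "\<dots> = smult (a^(2^Suc N)) (\<Prod>i\<in>A. [:- ((z i)^(2^Suc N)), 1:])"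
    by (simp add: power_mult[symmetric] mult.commute)
  finally show ?case .
qed

lemma prod_const_poly: fixes c :: "'a \<Rightarrow> 'b::comm_ring_1"
  shows "(\<Prod>i\<in>B. [:c i:]) = [:\<Prod>i\<in>B. c i:]"
  by (induction B rule: infinite_finite_induct) (simp_all add: mult.commute)

lemma coeff_lin_prod:
  fixes b :: "'a \<Rightarrow> 'b::comm_ring_1"
  assumes fin: "finite A"
  shows "coeff (\<Prod>i\<in>A. [:- b i, 1:]) k = (\<Sum>X\<in>{X. X \<subseteq> A \<and> card X = k}. \<Prod>i\<in>A - X. - b i)"
proof -
  have "(\<Prod>i\<in>A. [:- b i, 1:]) = (\<Prod>i\<in>A. [:0, 1:] + [:- b i:])"
    by (intro prod.cong) (simp_all add: pCons_one[symmetric] one_pCons)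
  also have "\<dots> = (\<Sum>X\<in>Pow A. (\<Prod>i\<in>X. [:0, 1:]) * (\<Prod>i\<in>A - X. [:- b i:]))"
    by (rule prod_add[OF fin])
  also have "\<dots> = (\<Sum>X\<in>Pow A. monom (\<Prod>i\<in>A - X. - b i) (card X))"
  proof (intro sum.cong refl)
    fix X
    have "(\<Prod>i\<in>A - X. [:- b i:]) = [:\<Prod>i\<in>A - X. - b i:]"
      by (rule prod_const_poly)
    then show "(\<Prod>i\<in>X. [:0, 1:]) * (\<Prod>i\<in>A - X. [:- b i:]) = monom (\<Prod>i\<in>A - X. - b i) (card X)"
      by (simp add: monom_altdef)
  qed
  finally have "coeff (\<Prod>i\<in>A. [:- b i, 1:]) k = (\<Sum>X\<in>Pow A. if card X = k then (\<Prod>i\<in>A - X. - b i) else 0)"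
    by (simp add: coeff_sum)
  also have "\<dots> = (\<Sum>X\<in>{X \<in> Pow A. card X = k}. \<Prod>i\<in>A - X. - b i)"
    by (rule sum.inter_filter[symmetric]) (use fin in simp)
  also have "{X \<in> Pow A. card X = k} = {X. X \<subseteq> A \<and> card X = k}" by auto
  finally show ?thesis .
qed



lemma top_prod:
  fixes x :: "nat \<Rightarrow> real"
  shows "(\<And>i j. 1 \<le> i \<Longrightarrow> i \<le> j \<Longrightarrow> j \<le> n \<Longrightarrow> x i \<le> x j) \<Longrightarrow> (\<And>i. 1 \<le> i \<Longrightarrow> i \<le> n \<Longrightarrow> 0 \<le> x i) \<Longrightarrow>
    T \<subseteq> {1..n} \<Longrightarrow> card T + k = n \<Longrightarrow> prod x T \<le> prod x {k<..n}"
proof (induction n arbitrary: T k)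
  case 0 then show ?case by simp
next
  case (Suc n)
  have mono': "\<And>i j. 1 \<le> i \<Longrightarrow> i \<le> j \<Longrightarrow> j \<le> n \<Longrightarrow> x i \<le> x j" using Suc.prems(1) by simp
  have nn': "\<And>i. 1 \<le> i \<Longrightarrow> i \<le> n \<Longrightarrow> 0 \<le> x i" using Suc.prems(2) by simp
  have finT: "finite T" using Suc.prems(3) finite_subset by blast
  show ?case
  proof (cases "Suc n \<in> T")
    case True
    define T' where "T' = T - {Suc n}"
    have T'sub: "T' \<subseteq> {1..n}" using Suc.prems(3) unfolding T'_def by (auto simp: le_Suc_eq)
    have cT: "card T = Suc (card T')" unfolding T'_def using card_Suc_Diff1[OF finT True] by simp
    then have ck: "card T' + k = n" using Suc.prems(4) by simp
    then have kn: "k \<le> n" by simp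
    have IH: "prod x T' \<le> prod x {k<..n}" using Suc.IH[OF mono' nn' T'sub ck] .
    have "prod x T = x (Suc n) * prod x T'" unfolding T'_def using True finT by (simp add: prod.remove)
    also have "\<dots> \<le> x (Suc n) * prod x {k<..n}"
      using IH Suc.prems(2)[of "Suc n"] by (intro mult_left_mono) auto
    also have "\<dots> = prod x {k<..Suc n}"
    proof -
      have "{k<..Suc n} = insert (Suc n) {k<..n}" using kn by auto
      then show ?thesis by simp
    qed
    finally show ?thesis .
  next
    case False
    have Tsub: "T \<subseteq> {1..n}" using Suc.prems(3) False by (auto simp: le_Suc_eq)
    show ?thesis
    proof (cases "k = Suc n")
      case True
      then have "T = {}" using Suc.prems(4) finT by simp
      then show ?thesis using True by simp
    next
      case False
      then have k1: "1 \<le> k" "k \<le> n"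
        using Suc.prems(4) card_mono[OF _ Tsub] by (fastforce, linarith)
      have ck: "card T + (k - 1) = n" using Suc.prems(4) k1 by simp
      have IH: "prod x T \<le> prod x {k - 1<..n}" using Suc.IH[OF mono' nn' Tsub ck] .
      have e1: "{k - 1<..n} = insert k {k<..n}" using k1 by auto
      have e2: "{k<..Suc n} = insert (Suc n) {k<..n}" using k1 by auto
      have pn: "0 \<le> prod x {k<..n}" using nn' k1 by (intro prod_nonneg) auto
      have "prod x {k - 1<..n} = x k * prod x {k<..n}" unfolding e1 by simp
      also have "\<dots> \<le> x (Suc n) * prod x {k<..n}"
        using Suc.prems(1)[of k "Suc n"] k1 pn by (intro mult_right_mono) auto
      also have "\<dots> = prod x {k<..Suc n}" unfolding e2 by simp
      finally show ?thesis using IH by simp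
    qed
  qed
qed

lemma swap_prod:
  fixes x :: "nat \<Rightarrow> real"
  assumes mono: "\<And>i j. 1 \<le> i \<Longrightarrow> i \<le> j \<Longrightarrow> j \<le> d \<Longrightarrow> x i \<le> x j"
    and pos: "\<And>i. 1 \<le> i \<Longrightarrow> i \<le> d \<Longrightarrow> 0 < x i"
    and k: "1 \<le> k" "k < d" and gap: "x (Suc k) \<ge> \<rho> * x k" and rho: "\<rho> > 0"
    and X: "X \<subseteq> {1..d}" "card X = k" "X \<noteq> {1..k}"
  shows "prod x ({1..d} - X) * \<rho> \<le> prod x {k<..d}"
proof -
  define T where "T = {1..d} - X"
  define T0 where "T0 = {k<..d}"
  have finX: "finite X" using X finite_subset by blast
  have cT: "card T = d - k" unfolding T_def using X finX by (simp add: card_Diff_subset)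
  have cT0: "card T0 = d - k" unfolding T0_def by simp
  have TT0: "T \<noteq> T0"
  proof
    assume "T = T0"
    moreover have "X = {1..d} - T" unfolding T_def using X(1) by auto
    ultimately have "X = {1..d} - {k<..d}" unfolding T0_def by simp
    also have "\<dots> = {1..k}" using k by auto
    finally have "X = {1..k}" .
    then show False using X(3) by simp
  qed
  have "\<not> T \<subseteq> T0"
  proof
    assume "T \<subseteq> T0"
    then have "T = T0" using card_subset_eq[of T0 T] cT cT0 unfolding T0_def by simp
    then show False using TT0 by simp
  qed
  then obtain t where t: "t \<in> T" "t \<notin> T0" by blast
  have "\<not> T0 \<subseteq> T"
  proof
    assume "T0 \<subseteq> T"
    then have "T0 = T" using card_subset_eq[of T T0] cT cT0 unfolding T_def by simp
    then show False using TT0 by simp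
  qed
  then obtain u where u: "u \<in> T0" "u \<notin> T" by blast
  have tk: "1 \<le> t" "t \<le> k" using t unfolding T_def T0_def by auto
  have uk: "k < u" "u \<le> d" using u unfolding T0_def by auto
  define T' where "T' = insert u (T - {t})"
  have finT: "finite T" unfolding T_def by simp
  have T'sub: "T' \<subseteq> {1..d}" unfolding T'_def T_def using uk by auto
  have cT': "card T' = d - k" unfolding T'_def using finT t u cT k by (simp add: card_Suc_Diff1)
  have "card T' + k = d" using cT' k by simp
  then have top: "prod x T' \<le> prod x T0" unfolding T0_def
    using top_prod[of d x T' k] mono pos T'sub by (meson less_imp_le)
  have pT: "prod x T = x t * prod x (T - {t})" using t finT by (simp add: prod.remove)
  have pT': "prod x T' = x u * prod x (T - {t})" unfolding T'_def using u finT by simp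
  have nn: "0 \<le> prod x (T - {t})" using pos unfolding T_def by (intro prod_nonneg) (auto intro: less_imp_le)
  have xt: "0 < x t" using pos tk k by simp
  have xu: "\<rho> * x t \<le> x u"
  proof -
    have "x t \<le> x k" using mono[of t k] tk k by simp
    then have "\<rho> * x t \<le> \<rho> * x k" using rho by simp
    also have "\<dots> \<le> x (Suc k)" using gap .
    also have "\<dots> \<le> x u" using mono[of "Suc k" u] uk by simp
    finally show ?thesis .
  qed
  have "x t * (prod x T * \<rho>) = (\<rho> * x t) * (x t * prod x (T - {t}))" using pT by (simp add: algebra_simps)
  also have "\<dots> \<le> x u * (x t * prod x (T - {t}))" using xu nn xt by (intro mult_right_mono) auto
  also have "\<dots> = x t * prod x T'" using pT' by (simp add: algebra_simps)
  also have "\<dots> \<le> x t * prod x T0" using top xt by simp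
  finally have "x t * (prod x T * \<rho>) \<le> x t * prod x T0" .
  then show ?thesis using xt unfolding T_def T0_def by simp
qed

lemma norm_term: fixes \<zeta> :: "nat \<Rightarrow> complex"
  shows "norm (\<Prod>i\<in>T. - (\<zeta> i ^ M)) = (\<Prod>i\<in>T. norm (\<zeta> i)) ^ M"
  by (simp add: prod_norm[symmetric] norm_power prod_power_distrib)

lemma card_subsets_le: "card {X. X \<subseteq> {1..d::nat} \<and> card X = k} \<le> 2 ^ d"
  using n_subsets[of "{1..d}" k] binomial_le_pow2[of d k] by simp

lemma coeff_bound_gen:
  fixes \<zeta> :: "nat \<Rightarrow> complex"
  assumes mono: "\<And>i j. 1 \<le> i \<Longrightarrow> i \<le> j \<Longrightarrow> j \<le> d \<Longrightarrow> norm (\<zeta> i) \<le> norm (\<zeta> j)"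
  shows "norm (coeff (\<Prod>i=1..d. [:- (\<zeta> i ^ M), 1:]) k) \<le> 2 ^ d * (\<Prod>i\<in>{k<..d}. norm (\<zeta> i)) ^ M"
proof (cases "k \<le> d")
  case False
  have "degree (\<Prod>i=1..d. [:- (\<zeta> i ^ M), 1:]) \<le> d"
    using degree_prod_sum_le[of "{1..d}" "\<lambda>i. [:- (\<zeta> i ^ M), 1:]"] by simp
  then have "coeff (\<Prod>i=1..d. [:- (\<zeta> i ^ M), 1:]) k = 0" using False by (intro coeff_eq_0) simp
  moreover have "{k<..d} = {}" using False by auto
  ultimately show ?thesis by simp
next
  case kd: True
  define XX where "XX = {X. X \<subseteq> {1..d::nat} \<and> card X = k}"
  define P where "P = (\<Prod>i\<in>{k<..d}. norm (\<zeta> i))"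
  have "norm (coeff (\<Prod>i=1..d. [:- (\<zeta> i ^ M), 1:]) k) = norm (\<Sum>X\<in>XX. \<Prod>i\<in>{1..d} - X. - (\<zeta> i ^ M))"
    unfolding XX_def by (subst coeff_lin_prod) simp_all
  also have "\<dots> \<le> (\<Sum>X\<in>XX. norm (\<Prod>i\<in>{1..d} - X. - (\<zeta> i ^ M)))" by (rule norm_sum)
  also have "\<dots> \<le> (\<Sum>X\<in>XX. P ^ M)"
  proof (rule sum_mono)
    fix X assume X: "X \<in> XX"
    have Xs: "X \<subseteq> {1..d}" "card X = k" using X unfolding XX_def by auto
    have "card X \<le> d" using Xs card_mono[of "{1..d}" X] by auto
    moreover have "card ({1..d} - X) = d - card X" using Xs by (simp add: card_Diff_subset finite_subset)
    ultimately have cc: "card ({1..d} - X) + k = d" using Xs by simp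
    have "(\<Prod>i\<in>{1..d} - X. norm (\<zeta> i)) \<le> P" unfolding P_def
      using top_prod[of d "\<lambda>i. norm (\<zeta> i)" "{1..d} - X" k] mono cc by simp
    then show "norm (\<Prod>i\<in>{1..d} - X. - (\<zeta> i ^ M)) \<le> P ^ M"
      unfolding norm_term by (intro power_mono) (auto intro: prod_nonneg)
  qed
  also have "\<dots> = real (card XX) * P ^ M" by simp
  also have "\<dots> \<le> 2 ^ d * P ^ M"
  proof (rule mult_right_mono)
    show "real (card XX) \<le> 2 ^ d" using card_subsets_le[of d k] unfolding XX_def[symmetric]
      by (simp add: of_nat_le_iff[symmetric])
    have "0 \<le> P" unfolding P_def by (simp add: prod_nonneg)
    then show "0 \<le> P ^ M" by simp
  qed
  finally show ?thesis unfolding P_def .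
qed

lemma coeff_bound_corner:
  fixes \<zeta> :: "nat \<Rightarrow> complex"
  assumes mono: "\<And>i j. 1 \<le> i \<Longrightarrow> i \<le> j \<Longrightarrow> j \<le> d \<Longrightarrow> norm (\<zeta> i) \<le> norm (\<zeta> j)"
    and pos: "\<And>i. 1 \<le> i \<Longrightarrow> i \<le> d \<Longrightarrow> 0 < norm (\<zeta> i)"
    and kd: "k \<le> d" and rho: "\<rho> > 0"
    and corner: "k = 0 \<or> k = d \<or> (1 \<le> k \<and> k < d \<and> norm (\<zeta> (Suc k)) \<ge> \<rho> * norm (\<zeta> k))"
  shows "norm (coeff (\<Prod>i=1..d. [:- (\<zeta> i ^ M), 1:]) k - (\<Prod>i\<in>{k<..d}. - (\<zeta> i ^ M)))
           \<le> 2 ^ d * (\<Prod>i\<in>{k<..d}. norm (\<zeta> i)) ^ M / \<rho> ^ M"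
proof -
  define XX where "XX = {X. X \<subseteq> {1..d::nat} \<and> card X = k}"
  define P where "P = (\<Prod>i\<in>{k<..d}. norm (\<zeta> i))"
  define tm where "tm X = (\<Prod>i\<in>{1..d} - X. - (\<zeta> i ^ M))" for X
  have finXX: "finite XX" unfolding XX_def by simp
  have X0: "{1..k} \<in> XX" unfolding XX_def using kd by auto
  have T0: "{1..d} - {1..k} = {k<..d}" by auto
  have "coeff (\<Prod>i=1..d. [:- (\<zeta> i ^ M), 1:]) k = (\<Sum>X\<in>XX. tm X)"
    unfolding XX_def tm_def by (subst coeff_lin_prod) simp_all
  also have "\<dots> = tm {1..k} + (\<Sum>X\<in>XX - {{1..k}}. tm X)" using sum.remove[OF finXX X0] .
  finally have eq: "coeff (\<Prod>i=1..d. [:- (\<zeta> i ^ M), 1:]) k - (\<Prod>i\<in>{k<..d}. - (\<zeta> i ^ M)) = (\<Sum>X\<in>XX - {{1..k}}. tm X)"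
    unfolding tm_def T0 by simp
  have bnd: "norm (tm X) \<le> P ^ M / \<rho> ^ M" if X: "X \<in> XX - {{1..k}}" for X
  proof -
    have Xs: "X \<subseteq> {1..d}" "card X = k" "X \<noteq> {1..k}" using X unfolding XX_def by auto
    have int: "1 \<le> k \<and> k < d \<and> norm (\<zeta> (Suc k)) \<ge> \<rho> * norm (\<zeta> k)"
    proof -
      have "k \<noteq> 0"
      proof
        assume "k = 0" then have "X = {}" using Xs finite_subset by fastforce
        then show False using Xs \<open>k = 0\<close> by simp
      qed
      moreover have "k \<noteq> d"
      proof
        assume "k = d" then have "X = {1..d}" using Xs card_subset_eq[of "{1..d}" X] by simp
        then show False using Xs \<open>k = d\<close> by simp
      qed
      ultimately show ?thesis using corner by simp
    qed
    have "(\<Prod>i\<in>{1..d} - X. norm (\<zeta> i)) * \<rho> \<le> P" unfolding P_def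
      using swap_prod[of d "\<lambda>i. norm (\<zeta> i)" k \<rho> X] mono pos int rho Xs by simp
    then have "(\<Prod>i\<in>{1..d} - X. norm (\<zeta> i)) \<le> P / \<rho>" using rho by (simp add: pos_le_divide_eq)
    then have "(\<Prod>i\<in>{1..d} - X. norm (\<zeta> i)) ^ M \<le> (P / \<rho>) ^ M"
      by (intro power_mono) (auto intro: prod_nonneg)
    then show ?thesis unfolding tm_def norm_term by (simp add: power_divide)
  qed
  have "norm (\<Sum>X\<in>XX - {{1..k}}. tm X) \<le> (\<Sum>X\<in>XX - {{1..k}}. norm (tm X))" by (rule norm_sum)
  also have "\<dots> \<le> (\<Sum>X\<in>XX - {{1..k}}. P ^ M / \<rho> ^ M)" using bnd by (rule sum_mono)
  also have "\<dots> = real (card (XX - {{1..k}})) * (P ^ M / \<rho> ^ M)" by simp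
  also have "\<dots> \<le> 2 ^ d * (P ^ M / \<rho> ^ M)"
  proof (rule mult_right_mono)
    have "card (XX - {{1..k}}) \<le> card XX" using finXX by (simp add: card_mono)
    also have "\<dots> \<le> 2 ^ d" unfolding XX_def by (rule card_subsets_le)
    finally show "real (card (XX - {{1..k}})) \<le> 2 ^ d" by (simp add: of_nat_le_iff[symmetric])
    have "0 \<le> P" unfolding P_def by (simp add: prod_nonneg)
    then show "0 \<le> P ^ M / \<rho> ^ M" using rho by simp
  qed
  finally show ?thesis unfolding eq P_def by simp
qed



definition cnd :: "real \<Rightarrow> (nat \<Rightarrow> ereal) \<Rightarrow> nat \<Rightarrow> nat \<Rightarrow> nat \<Rightarrow> bool" where
 "cnd E r a b i = ((r a - r b) / ereal (real a - real b) > (r i - r a) / ereal (real i - real a) - ereal E)"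

lemma sch_pop_cons2: "sch_pop E r i (a # b # rest) = (if cnd E r a b i then sch_pop E r i (b # rest) else a # b # rest)"
  by (simp add: cnd_def)

declare sch_pop.simps(1)[simp del]

lemma cnd_fin: "r a = ereal A \<Longrightarrow> r b = ereal B \<Longrightarrow> r i = ereal C \<Longrightarrow> b < a \<Longrightarrow> a < i \<Longrightarrow>
   cnd E r a b i \<longleftrightarrow> (A - B)/(real a - real b) > (C - A)/(real i - real a) - E"
  by (simp add: cnd_def)

lemma cnd_inf_top: "r a = \<infinity> \<Longrightarrow> r i = ereal C \<Longrightarrow> b < a \<Longrightarrow> a < i \<Longrightarrow> cnd E r a b i"
  by (cases "r b") (simp_all add: cnd_def)

lemma cnd_inf_new: "r i = \<infinity> \<Longrightarrow> r a = ereal A \<Longrightarrow> r b = ereal B \<Longrightarrow> b < a \<Longrightarrow> a < i \<Longrightarrow> \<not> cnd E r a b i"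
  by (simp add: cnd_def)

fun good :: "real \<Rightarrow> (nat \<Rightarrow> ereal) \<Rightarrow> nat list \<Rightarrow> bool" where
  "good \<sigma> r (n # p # rest) = (p < n \<and> (r n \<noteq> \<infinity> \<longrightarrow> r p \<noteq> \<infinity> \<and>
      \<sigma> \<le> (real_of_ereal (r n) - real_of_ereal (r p)) / (real n - real p)) \<and> good \<sigma> r (p # rest))"
| "good \<sigma> r _ = True"

lemma good_append: "good \<sigma> r (xs @ ys) \<Longrightarrow> good \<sigma> r ys"
proof (induction xs)
  case Nil then show ?case by simp
next
  case (Cons x xs)
  show ?case
  proof (cases "xs @ ys")
    case Nil then show ?thesis by simp
  next
    case (Cons p rest)
    with Cons.prems have "good \<sigma> r (xs @ ys)" by simp
    then show ?thesis using Cons.IH by simp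
  qed
qed

lemma hlp1: fixes X t m e :: real
  assumes "X \<ge> 1" "t \<le> X * m + e" "e \<ge> 0" shows "t / X \<le> m + e"
proof -
  have "1 * e \<le> X * e" using assms by (intro mult_right_mono) auto
  then have "t \<le> (m + e) * X" using assms by (simp add: algebra_simps)
  then show ?thesis using assms by (simp add: pos_divide_le_eq)
qed

lemma hlp2: fixes X t m e :: real
  assumes "X \<ge> 1" "t \<ge> X * m - e" "e \<ge> 0" shows "t / X \<ge> m - e"
proof -
  have "1 * e \<le> X * e" using assms by (intro mult_right_mono) auto
  then have "t \<ge> (m - e) * X" using assms by (simp add: algebra_simps)
  then show ?thesis using assms by (simp add: pos_le_divide_eq)
qed

locale hullsetup =
  fixes d :: nat and I :: "nat set" and s L :: "nat \<Rightarrow> real" and r :: "nat \<Rightarrow> ereal"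
    and \<delta> \<eta> E lr :: real
  assumes I_sub: "I \<subseteq> {0..d}" and I0: "0 \<in> I" and Id: "d \<in> I"
  and s_mono: "\<And>j k. 1 \<le> j \<Longrightarrow> j \<le> k \<Longrightarrow> k \<le> d \<Longrightarrow> s j \<le> s k"
  and L_step: "\<And>k. k < d \<Longrightarrow> L (Suc k) = L k + s (Suc k)"
  and corner_iff: "\<And>k. 1 \<le> k \<Longrightarrow> k < d \<Longrightarrow> k \<in> I \<longleftrightarrow> s k < s (Suc k)"
  and corner_gap: "\<And>k. 1 \<le> k \<Longrightarrow> k < d \<Longrightarrow> k \<in> I \<Longrightarrow> s (Suc k) \<ge> s k + lr"
  and r_corner: "\<And>k. k \<in> I \<Longrightarrow> \<exists>v. r k = ereal v \<and> \<bar>v - L k\<bar> \<le> \<delta>"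
  and r_other: "\<And>k. k \<le> d \<Longrightarrow> k \<notin> I \<Longrightarrow> r k = \<infinity> \<or> (\<exists>v. r k = ereal v \<and> v \<ge> L k - \<eta>)"
  and dpos: "\<delta> \<ge> 0" and epos: "\<eta> \<ge> 0" and E1: "E > 2 * (\<eta> + \<delta>)" and E2: "E + \<eta> + 4 * \<delta> \<le> lr"
begin

lemma seq: "c < j \<Longrightarrow> j \<le> n \<Longrightarrow> n \<le> d \<Longrightarrow> (\<forall>j. c < j \<and> j < n \<longrightarrow> j \<notin> I) \<Longrightarrow> s j = s (Suc c)"
proof (induction j)
  case 0 then show ?case by simp
next
  case (Suc j)
  show ?case
  proof (cases "j = c")
    case True then show ?thesis by simp
  next
    case False
    then have cj: "c < j" using Suc by simp
    have "s j = s (Suc c)" using Suc cj by simp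
    moreover have "j \<notin> I" using Suc cj by simp
    moreover have "s j \<le> s (Suc j)" using s_mono[of j "Suc j"] Suc cj by simp
    ultimately show ?thesis using corner_iff[of j] Suc cj by force
  qed
qed

lemma F1: "c \<le> n \<Longrightarrow> n \<le> d \<Longrightarrow> (\<forall>j. c < j \<and> j < n \<longrightarrow> j \<notin> I) \<Longrightarrow>
   L n = L c + (real n - real c) * s (Suc c)"
proof (induction n)
  case 0 then show ?case by simp
next
  case (Suc n)
  show ?case
  proof (cases "c = Suc n")
    case True then show ?thesis by simp
  next
    case False
    then have "c \<le> n" using Suc by simp
    then have "L n = L c + (real n - real c) * s (Suc c)" using Suc by simp
    moreover have "s (Suc n) = s (Suc c)" using seq[of c "Suc n" "Suc n"] Suc \<open>c \<le> n\<close> by simp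
    moreover have "L (Suc n) = L n + s (Suc n)" using L_step Suc by simp
    ultimately show ?thesis by (simp add: algebra_simps)
  qed
qed

lemma F2: "1 \<le> c \<Longrightarrow> c \<in> I \<Longrightarrow> c < i \<Longrightarrow> i \<le> d \<Longrightarrow> L i - L c \<ge> (real i - real c) * (s c + lr)"
proof (induction i)
  case 0 then show ?case by simp
next
  case (Suc i)
  have g: "s (Suc c) \<ge> s c + lr" using corner_gap Suc by simp
  have st: "L (Suc i) = L i + s (Suc i)" using L_step Suc by simp
  show ?case
  proof (cases "c = i")
    case True then show ?thesis using g st by simp
  next
    case False
    then have "L i - L c \<ge> (real i - real c) * (s c + lr)" using Suc by simp
    moreover have "s (Suc i) \<ge> s (Suc c)" using s_mono[of "Suc c" "Suc i"] Suc False by simp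
    ultimately show ?thesis using g st by (simp add: algebra_simps)
  qed
qed

lemma r_low: "k \<le> d \<Longrightarrow> r k = \<infinity> \<or> (\<exists>v. r k = ereal v \<and> v \<ge> L k - \<eta> - \<delta>)"
proof -
  assume k: "k \<le> d"
  show ?thesis
  proof (cases "k \<in> I")
    case True then obtain v where "r k = ereal v" "\<bar>v - L k\<bar> \<le> \<delta>" using r_corner by blast
    then show ?thesis using epos by auto
  next
    case False then show ?thesis using r_other[OF k] dpos by auto
  qed
qed

lemma r_fin: "k \<le> d \<Longrightarrow> r k \<noteq> \<infinity> \<Longrightarrow> \<exists>v. r k = ereal v"
  using r_low by blast

definition cl :: "nat \<Rightarrow> nat list" where "cl k = filter (\<lambda>j. j \<in> I) (rev [0..<Suc k])"

lemma cl_Suc: "cl (Suc k) = (if Suc k \<in> I then Suc k # cl k else cl k)"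
  by (simp add: cl_def)

lemma cl0: "cl 0 = [0]" using I0 by (simp add: cl_def)

lemma CL: "cl k \<noteq> [] \<and> hd (cl k) \<in> I \<and> hd (cl k) \<le> k \<and> (\<forall>j. hd (cl k) < j \<and> j \<le> k \<longrightarrow> j \<notin> I) \<and>
   (\<forall>a b rest. cl k = a # b # rest \<longrightarrow> b \<in> I \<and> b < a \<and> (\<forall>j. b < j \<and> j < a \<longrightarrow> j \<notin> I))"
proof (induction k)
  case 0 then show ?case using I0 by (auto simp: cl0)
next
  case (Suc k)
  show ?case
  proof (cases "Suc k \<in> I")
    case True
    then have e: "cl (Suc k) = Suc k # cl k" by (simp add: cl_Suc)
    obtain c cs where c: "cl k = c # cs" using Suc by (cases "cl k") auto
    show ?thesis unfolding e using Suc c True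
      by (auto simp: less_Suc_eq_le)
  next
    case False
    then have e: "cl (Suc k) = cl k" by (simp add: cl_Suc)
    show ?thesis unfolding e using Suc False by (auto simp: le_Suc_eq)
  qed
qed

lemma corner_stop: assumes "k < d" shows "sch_pop E r (Suc k) (cl k) = cl k"
proof (cases "cl k")
  case Nil then show ?thesis by simp
next
  case (Cons a l)
  show ?thesis
  proof (cases l)
    case Nil then show ?thesis using Cons by simp
  next
    case (Cons b rest)
    note ab = \<open>cl k = a # l\<close>[unfolded Cons]
    have C1: "hd (cl k) \<in> I" "hd (cl k) \<le> k" and C2: "\<forall>a b rest. cl k = a # b # rest \<longrightarrow> b \<in> I \<and> b < a \<and> (\<forall>j. b < j \<and> j < a \<longrightarrow> j \<notin> I)"
      using CL[of k] by blast+
    have aI: "a \<in> I" and ak: "a \<le> k" using C1 ab by simp_all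
    have bI: "b \<in> I" and ba: "b < a" and nob: "\<forall>j. b < j \<and> j < a \<longrightarrow> j \<notin> I" using C2 ab by blast+
    obtain A where A: "r a = ereal A" "\<bar>A - L a\<bar> \<le> \<delta>" using r_corner aI by blast
    obtain B where B: "r b = ereal B" "\<bar>B - L b\<bar> \<le> \<delta>" using r_corner bI by blast
    have "\<not> cnd E r a b (Suc k)"
    proof (cases "r (Suc k) = \<infinity>")
      case rinf: True
      have "a < Suc k" using ak by simp
      from cnd_inf_new[OF rinf A(1) B(1) ba this] show ?thesis .
    next
      case False
      have skd: "Suc k \<le> d" using assms by simp
      obtain C where C: "r (Suc k) = ereal C" "C \<ge> L (Suc k) - \<eta> - \<delta>" using r_low[OF skd] False by blast
      have ad: "a \<le> d" using ak assms by simp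
      have Lab: "L a = L b + (real a - real b) * s (Suc b)" using F1[OF less_imp_le[OF ba] ad nob] .
      have sab: "s a = s (Suc b)" using seq[OF ba le_refl ad nob] .
      have s1: "(A - B) / (real a - real b) \<le> s a + 2 * \<delta>"
      proof (rule hlp1)
        show "1 \<le> real a - real b" using ba by simp
        show "0 \<le> 2 * \<delta>" using dpos by simp
        show "A - B \<le> (real a - real b) * s a + 2 * \<delta>" using A(2) B(2) Lab sab by (simp add: abs_le_iff)
      qed
      have Lai: "L (Suc k) - L a \<ge> (real (Suc k) - real a) * (s a + lr)"
        proof -
        have "1 \<le> a" using ba by simp
        moreover have "a < Suc k" "Suc k \<le> d" using ak assms by simp_all
        ultimately show ?thesis using F2[of a "Suc k"] aI by blast
      qed
      have s2: "(C - A) / (real (Suc k) - real a) \<ge> (s a + lr) - (\<eta> + 2 * \<delta>)"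
      proof (rule hlp2)
        show "1 \<le> real (Suc k) - real a" using ak by simp
        show "0 \<le> \<eta> + 2 * \<delta>" using dpos epos by simp
        show "C - A \<ge> (real (Suc k) - real a) * (s a + lr) - (\<eta> + 2 * \<delta>)" using A(2) C(2) Lai by (simp add: abs_le_iff)
      qed
      have "\<not> ((A - B)/(real a - real b) > (C - A)/(real (Suc k) - real a) - E)" using s1 s2 E2 by linarith
      then show ?thesis using cnd_fin[OF A(1) B(1) C(1) ba] ak by simp
    qed
    then show ?thesis unfolding ab sch_pop_cons2 by simp
  qed
qed

abbreviation sig :: "nat \<Rightarrow> real" where "sig k \<equiv> s (Suc (hd (cl k))) - (\<eta> + \<delta>)"

lemma cl_cons: obtains cs where "cl k = hd (cl k) # cs"
  using CL[of k] by (cases "cl k") auto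

lemma pop_all:
  assumes iI: "Suc k \<in> I" and kd: "k < d"
  shows "set ns \<subseteq> {hd (cl k)<..k} - I \<Longrightarrow> good (sig k) r (ns @ [hd (cl k)]) \<Longrightarrow>
     sch_pop E r (Suc k) (ns @ cl k) = cl k"
proof (induction ns)
  case Nil then show ?case using corner_stop kd by simp
next
  case (Cons n ns')
  define c where "c = hd (cl k)"
  obtain cs where cs: "cl k = c # cs" unfolding c_def using cl_cons by blast
  define p where "p = hd (ns' @ [c])"
  obtain rest' where rest': "ns' @ cl k = p # rest'" unfolding p_def cs by (cases ns') auto
  have e1: "ns' @ [c] = p # tl (ns' @ [c])" unfolding p_def by (cases ns') auto
  have g: "good (sig k) r (n # p # tl (ns' @ [c]))" using Cons.prems(2) e1 unfolding c_def by (metis append_Cons)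
  have pn: "p < n" using g by simp
  have gp: "r n \<noteq> \<infinity> \<longrightarrow> r p \<noteq> \<infinity> \<and> sig k \<le> (real_of_ereal (r n) - real_of_ereal (r p)) / (real n - real p)"
    using g by simp
  have g': "good (sig k) r (ns' @ [c])" using g by (subst e1) simp
  have nset: "c < n" "n \<le> k" "n \<notin> I" using Cons.prems(1) unfolding c_def by auto
  have CLk: "c \<in> I" "c \<le> k" "\<forall>j. c < j \<and> j \<le> k \<longrightarrow> j \<notin> I" using CL[of k] unfolding c_def by blast+
  have noc: "\<forall>j. c < j \<and> j < Suc k \<longrightarrow> j \<notin> I" using CLk(3) by auto
  have skd: "Suc k \<le> d" using kd by simp
  obtain C where C: "r (Suc k) = ereal C" "\<bar>C - L (Suc k)\<bar> \<le> \<delta>" using r_corner iI by blast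
  have cond: "cnd E r n p (Suc k)"
  proof (cases "r n = \<infinity>")
    case True
    show ?thesis by (rule cnd_inf_top[OF True C(1) pn]) (use nset in simp)
  next
    case False
    have nd: "n \<le> d" "p \<le> d" using nset kd pn by simp_all
    obtain Nv where Nv: "r n = ereal Nv" "Nv \<ge> L n - \<eta>" using r_other[OF nd(1) nset(3)] False by blast
    have "r p \<noteq> \<infinity>" and sl: "sig k \<le> (Nv - real_of_ereal (r p)) / (real n - real p)" using gp False Nv by auto
    then obtain Pv where Pv: "r p = ereal Pv" using r_fin[OF nd(2)] by blast
    have sl2: "s (Suc c) - (\<eta> + \<delta>) \<le> (Nv - Pv) / (real n - real p)" using sl Pv unfolding c_def by simp
    have Ln: "L n = L c + (real n - real c) * s (Suc c)" using F1[of c n] nset CLk noc nd by auto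
    have Li: "L (Suc k) = L c + (real (Suc k) - real c) * s (Suc c)" using F1[of c "Suc k"] CLk noc skd by auto
    have s2: "(C - Nv) / (real (Suc k) - real n) \<le> s (Suc c) + (\<eta> + \<delta>)"
    proof (rule hlp1)
      show "1 \<le> real (Suc k) - real n" using nset by simp
      show "0 \<le> \<eta> + \<delta>" using dpos epos by simp
      show "C - Nv \<le> (real (Suc k) - real n) * s (Suc c) + (\<eta> + \<delta>)"
        using C(2) Nv(2) Ln Li by (simp add: abs_le_iff algebra_simps)
    qed
    have "(Nv - Pv) / (real n - real p) > (C - Nv) / (real (Suc k) - real n) - E"
      using sl2 s2 E1 by (smt (verit))
    then show ?thesis using cnd_fin[OF Nv(1) Pv C(1) pn] nset by simp
  qed
  have "sch_pop E r (Suc k) ((n # ns') @ cl k) = sch_pop E r (Suc k) (ns' @ cl k)"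
    using cond rest' by (simp add: sch_pop_cons2)
  also have "\<dots> = cl k" using Cons.IH Cons.prems(1) g' unfolding c_def by auto
  finally show ?case .
qed


lemma pop_part:
  assumes iI: "Suc k \<notin> I" and kd: "k < d"
  shows "set ns \<subseteq> {hd (cl k)<..k} - I \<Longrightarrow>
     \<exists>j. sch_pop E r (Suc k) (ns @ cl k) = drop j ns @ cl k \<and>
         (drop j ns \<noteq> [] \<longrightarrow> \<not> cnd E r (hd (drop j ns)) (hd (tl (drop j ns) @ [hd (cl k)])) (Suc k))"
proof (induction ns)
  case Nil then show ?case using corner_stop kd by simp
next
  case (Cons n ns')
  define c where "c = hd (cl k)"
  obtain cs where cs: "cl k = c # cs" unfolding c_def using cl_cons by blast
  define p where "p = hd (ns' @ [c])"
  obtain rest' where rest': "ns' @ cl k = p # rest'" unfolding p_def cs by (cases ns') auto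
  show ?case
  proof (cases "cnd E r n p (Suc k)")
    case True
    then have "sch_pop E r (Suc k) ((n # ns') @ cl k) = sch_pop E r (Suc k) (ns' @ cl k)"
      using rest' by (simp add: sch_pop_cons2)
    moreover obtain j where "sch_pop E r (Suc k) (ns' @ cl k) = drop j ns' @ cl k \<and>
         (drop j ns' \<noteq> [] \<longrightarrow> \<not> cnd E r (hd (drop j ns')) (hd (tl (drop j ns') @ [hd (cl k)])) (Suc k))"
      using Cons by auto
    ultimately show ?thesis by (intro exI[of _ "Suc j"]) simp
  next
    case False
    then have "sch_pop E r (Suc k) ((n # ns') @ cl k) = (n # ns') @ cl k"
      using rest' by (simp add: sch_pop_cons2)
    then show ?thesis using False unfolding p_def c_def by (intro exI[of _ 0]) simp
  qed
qed

definition Inv :: "nat \<Rightarrow> nat list \<Rightarrow> bool" where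
  "Inv k st = (\<exists>ns. st = ns @ cl k \<and> set ns \<subseteq> {hd (cl k)<..k} - I \<and> good (sig k) r (ns @ [hd (cl k)]))"

lemma good_drop: "good \<sigma> r (ns @ ys) \<Longrightarrow> good \<sigma> r (drop j ns @ ys)"
  using good_append[of \<sigma> r "take j ns" "drop j ns @ ys"] by (simp add: append_assoc[symmetric])

lemma step:
  assumes inv: "Inv k st" and kd: "k < d"
  shows "Inv (Suc k) (Suc k # sch_pop E r (Suc k) st)"
proof -
  obtain ns where st: "st = ns @ cl k" and nsI: "set ns \<subseteq> {hd (cl k)<..k} - I"
    and g: "good (sig k) r (ns @ [hd (cl k)])" using inv unfolding Inv_def by blast
  define c where "c = hd (cl k)"
  have CLk: "c \<in> I" "c \<le> k" "\<forall>j. c < j \<and> j \<le> k \<longrightarrow> j \<notin> I" using CL[of k] unfolding c_def by blast+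
  have skd: "Suc k \<le> d" using kd by simp
  show ?thesis
  proof (cases "Suc k \<in> I")
    case True
    have "sch_pop E r (Suc k) st = cl k" using pop_all[OF True kd nsI g] st by simp
    moreover have "cl (Suc k) = Suc k # cl k" using True by (simp add: cl_Suc)
    ultimately show ?thesis unfolding Inv_def by (intro exI[of _ "[]"]) simp
  next
    case False
    have clS: "cl (Suc k) = cl k" using False by (simp add: cl_Suc)
    obtain j where j: "sch_pop E r (Suc k) (ns @ cl k) = drop j ns @ cl k"
      and nc: "drop j ns \<noteq> [] \<longrightarrow> \<not> cnd E r (hd (drop j ns)) (hd (tl (drop j ns) @ [c])) (Suc k)"
      using pop_part[OF False kd nsI] unfolding c_def by blast
    define ns' where "ns' = drop j ns"
    have g': "good (sig k) r (ns' @ [c])" using good_drop[OF g] unfolding ns'_def c_def .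
    have ns'I: "set ns' \<subseteq> {c<..k} - I" using nsI set_drop_subset[of j ns] unfolding ns'_def c_def by blast
    define t where "t = hd (ns' @ [c])"
    have e1: "ns' @ [c] = t # tl (ns' @ [c])" unfolding t_def by (cases ns') auto
    have tk: "t \<le> k" using ns'I CLk unfolding t_def by (cases ns') auto
    have pair: "r (Suc k) \<noteq> \<infinity> \<longrightarrow> r t \<noteq> \<infinity> \<and>
        sig k \<le> (real_of_ereal (r (Suc k)) - real_of_ereal (r t)) / (real (Suc k) - real t)"
    proof
      assume rf: "r (Suc k) \<noteq> \<infinity>"
      obtain V where V: "r (Suc k) = ereal V" "V \<ge> L (Suc k) - \<eta>" using r_other[OF skd False] rf by blast
      show "r t \<noteq> \<infinity> \<and> sig k \<le> (real_of_ereal (r (Suc k)) - real_of_ereal (r t)) / (real (Suc k) - real t)"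
      proof (cases ns')
        case Nil
        then have tc: "t = c" unfolding t_def by simp
        obtain Cv where Cv: "r c = ereal Cv" "\<bar>Cv - L c\<bar> \<le> \<delta>" using r_corner CLk(1) by blast
        have noc: "\<forall>j. c < j \<and> j < Suc k \<longrightarrow> j \<notin> I" using CLk(3) by auto
        have Li: "L (Suc k) = L c + (real (Suc k) - real c) * s (Suc c)" using F1[of c "Suc k"] CLk noc skd by auto
        have "(V - Cv) / (real (Suc k) - real c) \<ge> s (Suc c) - (\<eta> + \<delta>)"
        proof (rule hlp2)
          show "1 \<le> real (Suc k) - real c" using CLk by simp
          show "0 \<le> \<eta> + \<delta>" using dpos epos by simp
          show "V - Cv \<ge> (real (Suc k) - real c) * s (Suc c) - (\<eta> + \<delta>)"
            using Cv(2) V(2) Li by (simp add: abs_le_iff algebra_simps)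
        qed
        then show ?thesis using tc Cv V unfolding c_def by simp
      next
        case (Cons t' ns'')
        then have tt: "t' = t" unfolding t_def by simp
        define p where "p = hd (ns'' @ [c])"
        have e2: "ns'' @ [c] = p # tl (ns'' @ [c])" unfolding p_def by (cases ns'') auto
        have gg: "good (sig k) r (t # p # tl (ns'' @ [c]))" using g' Cons tt e2 by (metis append_Cons)
        have pt: "p < t" using gg by simp
        have gp: "r t \<noteq> \<infinity> \<longrightarrow> r p \<noteq> \<infinity> \<and> sig k \<le> (real_of_ereal (r t) - real_of_ereal (r p)) / (real t - real p)"
          using gg by simp
        have ncd: "\<not> cnd E r t p (Suc k)" using nc Cons tt unfolding ns'_def p_def by simp
        have rt: "r t \<noteq> \<infinity>"
        proof
          assume "r t = \<infinity>"
          from cnd_inf_top[OF this V(1) pt] tk ncd show False by simp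
        qed
        then obtain T where T: "r t = ereal T" using r_fin[of t] tk kd by auto
        have "r p \<noteq> \<infinity>" and sl: "sig k \<le> (T - real_of_ereal (r p)) / (real t - real p)" using gp rt T by auto
        then obtain P where P: "r p = ereal P" using r_fin[of p] pt tk kd by auto
        have "\<not> ((T - P) / (real t - real p) > (V - T) / (real (Suc k) - real t) - E)"
          using ncd cnd_fin[OF T P V(1) pt] tk by simp
        then have "(V - T) / (real (Suc k) - real t) \<ge> sig k" using sl P E1 dpos epos by simp
        then show ?thesis using rt T V by simp
      qed
    qed
    have g'': "good (sig k) r (t # tl (ns' @ [c]))" using g' e1 by metis
    have "good (sig k) r (Suc k # t # tl (ns' @ [c]))" using g'' tk pair by simp
    then have gnew: "good (sig k) r (Suc k # ns' @ [c])" using e1 by metis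
    have "Suc k # sch_pop E r (Suc k) st = (Suc k # ns') @ cl (Suc k)" using j st clS unfolding ns'_def by simp
    moreover have "set (Suc k # ns') \<subseteq> {hd (cl (Suc k))<..Suc k} - I" using ns'I False CLk clS unfolding c_def by auto
    moreover have "good (sig (Suc k)) r ((Suc k # ns') @ [hd (cl (Suc k))])" using gnew clS unfolding c_def by simp
    ultimately show ?thesis unfolding Inv_def by blast
  qed
qed

lemma loop: "k \<le> d \<Longrightarrow> Inv k (foldl (\<lambda>st i. i # sch_pop E r i st) [0] [1..<Suc k])"
proof (induction k)
  case 0 then show ?case unfolding Inv_def by (intro exI[of _ "[]"]) (simp add: cl0)
next
  case (Suc k)
  have "[1..<Suc (Suc k)] = [1..<Suc k] @ [Suc k]" by simp
  then show ?case using step[OF Suc.IH] Suc.prems by simp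
qed

lemma final: "foldl (\<lambda>st i. i # sch_pop E r i st) [0] [1..<Suc d] = cl d"
proof -
  obtain ns where st: "foldl (\<lambda>st i. i # sch_pop E r i st) [0] [1..<Suc d] = ns @ cl d"
    and nsI: "set ns \<subseteq> {hd (cl d)<..d} - I" using loop[of d] unfolding Inv_def by blast
  have "hd (cl d) = d"
  proof (rule ccontr)
    assume "hd (cl d) \<noteq> d"
    then have "hd (cl d) < d" using CL[of d] by simp
    then show False using CL[of d] Id by blast
  qed
  then have "ns = []" using nsI by auto
  then show ?thesis using st by simp
qed

lemma result: "rev (foldl (\<lambda>st i. i # sch_pop E r i st) [0] [1..<Suc d]) = sorted_list_of_set I"
proof -
  have "rev (cl d) = filter (\<lambda>j. j \<in> I) [0..<Suc d]" unfolding cl_def by (simp add: rev_filter)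
  also have "\<dots> = sorted_list_of_set I"
  proof -
    have fin: "finite I" using I_sub finite_subset by blast
    have "set (filter (\<lambda>j. j \<in> I) [0..<Suc d]) = I" using I_sub Id by (auto simp: subset_iff less_Suc_eq_le)
    then show ?thesis
    proof (intro sorted_distinct_set_unique)
      show "sorted (filter (\<lambda>j. j \<in> I) [0..<Suc d])" by (rule sorted_wrt_filter) (rule sorted_upt)
    qed (simp_all add: fin)
  qed
  finally show ?thesis using final by simp
qed


end



lemma ln2_ge_half: "ln (2::real) \<ge> 1/2"
proof -
  have "ln (1/2::real) \<le> 1/2 - 1" by (rule ln_le_minus_one) simp
  then show ?thesis by (simp add: ln_div)
qed

lemma realpow_exp: "(0::real) < a \<Longrightarrow> a ^ n = exp (real n * ln a)"
  by (metis exp_ln ln_realpow zero_less_power)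

lemma numerics:
  fixes N d :: nat and \<rho> :: real
  assumes d1: "d \<ge> 1" and rho1: "\<rho> > 1"
    and Nbig: "real N > 3 + log 2 (real d * ln 2 / ln \<rho>)"
  defines "M \<equiv> (2::real) ^ N" and "R \<equiv> \<rho> ^ (2 ^ N)"
  defines "u \<equiv> 2 ^ d / R"
  defines "\<eta> \<equiv> real d * ln 2 / M" and "\<delta> \<equiv> - ln (1 - u) / M"
  shows "0 < u" "u \<le> 1/128" "\<eta> \<ge> 0" "\<delta> \<ge> 0"
    "sch_E N d \<rho> > 2 * (\<eta> + \<delta>)" "sch_E N d \<rho> + \<eta> + 4 * \<delta> \<le> ln \<rho>"
proof -
  define lr where "lr = ln \<rho>"
  have lr: "lr > 0" unfolding lr_def using rho1 by simp
  have Mpos: "M > 0" unfolding M_def by simp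
  define y where "y = real d * ln 2 / lr"
  have ypos: "y > 0" unfolding y_def using lr d1 by simp
  have "M = 2 powr real N" unfolding M_def by (simp add: powr_realpow)
  also have "\<dots> > 2 powr (3 + log 2 y)" using Nbig unfolding y_def lr_def by (intro powr_less_mono) auto
  also have "2 powr (3 + log 2 y) = 8 * y" using ypos by (simp add: powr_add)
  finally have M8: "M > 8 * y" .
  define q where "q = M * lr"
  have q8: "q > 8 * (real d * ln 2)"
  proof -
    have "M * lr > 8 * y * lr" using M8 lr by simp
    then show ?thesis unfolding q_def y_def using lr by simp
  qed
  have ln2: "ln (2::real) \<ge> 1/2" by (rule ln2_ge_half)
  have R_exp: "R = exp q"
    unfolding R_def q_def M_def lr_def using rho1 by (simp add: realpow_exp)
  have Rpos: "R > 0" using R_exp by simp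
  have R8: "R > 2 ^ (8 * d)"
  proof -
    have "(2::real) ^ (8 * d) = exp (real (8 * d) * ln 2)" by (simp add: realpow_exp)
    also have "\<dots> < exp q" using q8 by simp
    finally show ?thesis using R_exp by simp
  qed
  show upos: "0 < u" unfolding u_def using Rpos by simp
  have "u < 2 ^ d / 2 ^ (8 * d)" unfolding u_def using R8 Rpos by (intro divide_strict_left_mono) auto
  also have "(2::real) ^ d / 2 ^ (8 * d) = 1 / 2 ^ (7 * d)"
  proof -
    have "(2::real) ^ (8 * d) = 2 ^ d * 2 ^ (7 * d)" by (simp add: power_add[symmetric])
    then show ?thesis by simp
  qed
  also have "\<dots> \<le> 1 / 2 ^ 7"
  proof -
    have "(2::real) ^ 7 \<le> 2 ^ (7 * d)" using d1 by (intro power_increasing) auto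
    then show ?thesis by (intro divide_left_mono) auto
  qed
  finally show u128: "u \<le> 1/128" by simp
  show eta0: "\<eta> \<ge> 0" unfolding \<eta>_def using Mpos by simp
  have lnu: "- ln (1 - u) \<le> 2 * u"
  proof -
    have "- u - 2 * u\<^sup>2 \<le> ln (1 - u)" using upos u128 by (intro ln_one_minus_pos_lower_bound) auto
    moreover have "u\<^sup>2 \<le> u / 2" using upos u128 by (simp add: power2_eq_square)
    ultimately show ?thesis by simp
  qed
  have lnu0: "- ln (1 - u) \<ge> 0" using upos u128 by simp
  show del0: "\<delta> \<ge> 0" unfolding \<delta>_def using lnu0 Mpos by (simp add: divide_nonpos_pos)
  define l1 where "l1 = ln (1 + 1 / R)"
  have l1a: "l1 \<ge> 0" unfolding l1_def using Rpos by simp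
  have l1b: "l1 \<le> u"
  proof -
    have "l1 \<le> 1 / R" unfolding l1_def using Rpos by (intro ln_add_one_self_le_self) simp
    also have "\<dots> \<le> u" unfolding u_def using Rpos by (intro divide_right_mono) auto
    finally show ?thesis .
  qed
  have p1: "2 powr (1 - real N) = 2 / M" unfolding M_def by (simp add: powr_diff powr_realpow)
  have p2: "2 powr (2 - real N) = 4 / M" unfolding M_def by (simp add: powr_diff powr_realpow)
  have lnA: "ln (2 ^ d + 2 ^ d / R) = real d * ln 2 + l1"
  proof -
    have "(2::real) ^ d + 2 ^ d / R = 2 ^ d * (1 + 1 / R)" by (simp add: algebra_simps)
    moreover have "(1::real) + 1 / R > 0" using Rpos by (simp add: add_pos_pos)
    ultimately show ?thesis unfolding l1_def using Rpos by (simp add: ln_mult ln_realpow)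
  qed
  have Eeq: "sch_E N d \<rho> = \<eta> + l1 / M + 2 * \<delta> + lr / 4"
    unfolding sch_E_def Let_def R_def[symmetric] p1 p2 lnA unfolding u_def[symmetric] \<eta>_def \<delta>_def lr_def
    using Mpos by (simp add: field_simps)
  define lM where "lM = l1 / M"
  have etaq: "\<eta> * M = real d * ln 2" unfolding \<eta>_def using Mpos by simp
  have delq: "\<delta> * M = - ln (1 - u)" unfolding \<delta>_def using Mpos by simp
  have lrq: "lr * M = q" unfolding q_def by simp
  show "sch_E N d \<rho> > 2 * (\<eta> + \<delta>)"
  proof -
    have "(2 * \<eta> - lr / 4) * M < 0" using etaq lrq q8 by (simp add: algebra_simps)
    then have "2 * \<eta> - lr / 4 < 0" using Mpos by (simp add: mult_less_0_iff)
    moreover have "l1 / M \<ge> 0" using l1a Mpos by simp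
    ultimately have "\<eta> < l1 / M + lr / 4" using lr by linarith
    then show ?thesis unfolding Eeq by simp
  qed
  show "sch_E N d \<rho> + \<eta> + 4 * \<delta> \<le> ln \<rho>"
  proof -
    have "(2 * \<eta> + l1 / M + 6 * \<delta> - 3 * lr / 4) * M = 2 * (real d * ln 2) + l1 + 6 * (- ln (1 - u)) - 3 * q / 4"
      using etaq delq lrq Mpos by (simp add: algebra_simps diff_divide_distrib add_divide_distrib)
    also have "\<dots> < 0"
    proof -
      have "real d * ln 2 \<ge> 1 * (1/2)" using d1 ln2 by (intro mult_mono) auto
      then show ?thesis using q8 l1b lnu u128 by linarith
    qed
    finally have "2 * \<eta> + l1 / M + 6 * \<delta> - 3 * lr / 4 < 0" using Mpos by (simp add: mult_less_0_iff)
    then show ?thesis unfolding Eeq lr_def[symmetric] by (simp only: lM_def[symmetric])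
  qed
qed




lemma ln_mono2: "(0::real) < a \<Longrightarrow> a \<le> b \<Longrightarrow> ln a \<le> ln b"
  by simp

lemma const_chain: fixes x :: "nat \<Rightarrow> real"
  assumes "\<And>k. 1 \<le> k \<Longrightarrow> k < d \<Longrightarrow> x (Suc k) = x k"
  shows "1 \<le> j \<Longrightarrow> j \<le> d \<Longrightarrow> x j = x 1"
proof (induction j)
  case 0 then show ?case by simp
next
  case (Suc j)
  show ?case
  proof (cases "j = 0")
    case True then show ?thesis by simp
  next
    case False
    then show ?thesis using Suc assms[of j] by simp
  qed
qed

theorem mainTheorem1:
  fixes f :: "complex poly" and \<zeta> :: "nat \<Rightarrow> complex" and N d :: nat and \<rho> :: real
    and r :: "nat \<Rightarrow> ereal"
  assumes deg: "degree f = d"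
    and f0: "poly f 0 \<noteq> 0"
    and roots: "f = smult (lead_coeff f) (\<Prod>i=1..d. [:- \<zeta> i, 1:])"
    and sorted: "\<And>i j. 1 \<le> i \<Longrightarrow> i \<le> j \<Longrightarrow> j \<le> d \<Longrightarrow> norm (\<zeta> i) \<le> norm (\<zeta> j)"
    and notall: "\<exists>i\<in>{1..d}. \<exists>j\<in>{1..d}. norm (\<zeta> i) \<noteq> norm (\<zeta> j)"
    and rho: "\<rho> = Min {norm (\<zeta> (i+1)) / norm (\<zeta> i) | i. 1 \<le> i \<and> i < d \<and> norm (\<zeta> i) < norm (\<zeta> (i+1))}"
    and Npos: "N > 0"
    and Nbig: "real N > 3 + log 2 (real d * ln 2 / ln \<rho>)"
    and r_def: "\<And>i. r i = (if coeff ((graeffe ^^ N) f) i = 0 then \<infinity>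
                   else ereal (- ln (norm (coeff ((graeffe ^^ N) f) i)) / 2 ^ N))"
  shows "strict_convex_hull N d (\<lambda>i. r i) \<rho> =
           sorted_list_of_set ({0, d} \<union> {i. 1 \<le> i \<and> i \<le> d - 1 \<and> norm (\<zeta> i) < norm (\<zeta> (i+1))})"

proof -
  define x where "x i = norm (\<zeta> i)" for i
  define c where "c = lead_coeff f"
  define M where "M = (2::nat) ^ N"
  define Mr where "Mr = (2::real) ^ N"
  have MrM: "real M = Mr" unfolding M_def Mr_def by simp
  have Mrpos: "Mr > 0" unfolding Mr_def by simp
  define Pr where "Pr = (\<Prod>i=1..d. [:- (\<zeta> i ^ M), 1:])"
  have fne: "f \<noteq> 0" using f0 by auto
  have cne: "c \<noteq> 0" using fne unfolding c_def by simp
  have pf: "poly f 0 = c * (\<Prod>i=1..d. - \<zeta> i)"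
  proof -
    have "poly f 0 = poly (smult (lead_coeff f) (\<Prod>i=1..d. [:- \<zeta> i, 1:])) 0"
      using arg_cong[OF roots, of "\<lambda>p. poly p 0"] .
    then show ?thesis unfolding c_def by (simp add: poly_prod)
  qed
  have xpos: "\<And>i. 1 \<le> i \<Longrightarrow> i \<le> d \<Longrightarrow> 0 < x i"
  proof -
    fix i assume i: "1 \<le> i" "i \<le> d"
    have "(\<Prod>i=1..d. - \<zeta> i) \<noteq> 0" using pf f0 by auto
    then have "\<zeta> i \<noteq> 0" using i by (auto simp: prod_zero_iff)
    then show "0 < x i" unfolding x_def by simp
  qed
  have xmono: "\<And>i j. 1 \<le> i \<Longrightarrow> i \<le> j \<Longrightarrow> j \<le> d \<Longrightarrow> x i \<le> x j"
    unfolding x_def using sorted by blast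
  have ex: "\<exists>k. 1 \<le> k \<and> k < d \<and> x k < x (Suc k)"
  proof (rule ccontr)
    assume na: "\<not> ?thesis"
    have eq: "x (Suc k) = x k" if "1 \<le> k" "k < d" for k
      using na xmono[of k "Suc k"] that by force
    have xc: "x j = x 1" if "1 \<le> j" "j \<le> d" for j using const_chain[of d x j, OF eq] that by blast
    obtain i j where ij: "i \<in> {1..d}" "j \<in> {1..d}" "norm (\<zeta> i) \<noteq> norm (\<zeta> j)" using notall by blast
    have "x i = x j" using xc[of i] xc[of j] ij(1,2) by simp
    then show False using ij(3) unfolding x_def by simp
  qed
  then obtain k0 where k0: "1 \<le> k0" "k0 < d" "x k0 < x (Suc k0)" by blast
  have d2: "d \<ge> 2" using k0 by simp
  define S where "S = {norm (\<zeta> (i+1)) / norm (\<zeta> i) | i. 1 \<le> i \<and> i < d \<and> norm (\<zeta> i) < norm (\<zeta> (i+1))}"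
  have rhoS: "\<rho> = Min S" unfolding S_def rho ..
  have finS: "finite S"
  proof -
    have "S \<subseteq> (\<lambda>i. norm (\<zeta> (i+1)) / norm (\<zeta> i)) ` {1..<d}" unfolding S_def by auto
    then show ?thesis using finite_subset by blast
  qed
  have Sne: "S \<noteq> {}" unfolding S_def using k0 unfolding x_def by auto
  have rho_le: "\<rho> \<le> x (Suc k) / x k" if "1 \<le> k" "k < d" "x k < x (Suc k)" for k
    unfolding rhoS using that finS unfolding S_def x_def by (intro Min_le) auto
  have rho1: "\<rho> > 1"
  proof -
    have "\<rho> \<in> S" unfolding rhoS using finS Sne by (rule Min_in)
    then obtain i where i: "1 \<le> i" "i < d" "x i < x (Suc i)" "\<rho> = x (Suc i) / x i"
      unfolding S_def x_def by auto
    then show ?thesis using xpos[of i] by simp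
  qed
  have gap: "x (Suc k) \<ge> \<rho> * x k" if "1 \<le> k" "k < d" "x k < x (Suc k)" for k
    using rho_le[OF that] xpos[of k] that by (simp add: pos_le_divide_eq mult.commute)
  have gN: "(graeffe ^^ N) f = smult (c ^ M) Pr"
  proof -
    have "(graeffe ^^ N) f = (graeffe ^^ N) (smult c (\<Prod>i=1..d. [:- \<zeta> i, 1:]))"
      unfolding c_def using arg_cong[OF roots, of "graeffe ^^ N"] .
    also have "\<dots> = smult (c ^ M) Pr" unfolding Pr_def M_def
      using graeffe_iter[of "{1..d}" c N \<zeta>] cne by simp
    finally show ?thesis .
  qed
  define L where "L k = - ln (norm c) - (\<Sum>i\<in>{k<..d}. ln (x i))" for k
  define P where "P k = (\<Prod>i\<in>{k<..d}. x i)" for k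
  have Ppos: "P k > 0" for k unfolding P_def using xpos by (intro prod_pos) auto
  have lnP: "ln (P k ^ M) = Mr * (\<Sum>i\<in>{k<..d}. ln (x i))" for k
  proof -
    have xnz: "x i \<noteq> 0" if "i \<in> {k<..d}" for i
    proof -
      have "1 \<le> i" "i \<le> d" using that by auto
      then show ?thesis using xpos[of i] by simp
    qed
    have "ln (P k) = (\<Sum>i\<in>{k<..d}. ln (x i))" unfolding P_def using xnz
      by (subst ln_prod) auto
    then show ?thesis using Ppos[of k] MrM by (simp add: ln_realpow)
  qed
  have rval: "r k = ereal (L k - (ln (norm (coeff Pr k)) - ln (P k ^ M)) / Mr)" if nz: "coeff Pr k \<noteq> 0" for k
  proof -
    have cg: "coeff ((graeffe ^^ N) f) k = c ^ M * coeff Pr k" using gN by simp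
    then have "coeff ((graeffe ^^ N) f) k \<noteq> 0" using nz cne by simp
    then have "r k = ereal (- ln (norm (c ^ M * coeff Pr k)) / Mr)" using r_def[of k] cg unfolding Mr_def by simp
    also have "ln (norm (c ^ M * coeff Pr k)) = Mr * ln (norm c) + ln (norm (coeff Pr k))"
      using cne nz MrM by (simp add: norm_mult norm_power ln_mult ln_realpow)
    finally show ?thesis unfolding L_def lnP using Mrpos by (simp add: field_simps)
  qed
  define I where "I = {0, d} \<union> {i. 1 \<le> i \<and> i \<le> d - 1 \<and> norm (\<zeta> i) < norm (\<zeta> (i+1))}"
  define R where "R = \<rho> ^ (2 ^ N)"
  define u where "u = 2 ^ d / R"
  define \<eta> where "\<eta> = real d * ln 2 / Mr"
  define \<delta> where "\<delta> = - ln (1 - u) / Mr"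
  have d1: "d \<ge> 1" using d2 by simp
  note num = numerics[OF d1 rho1 Nbig, folded Mr_def R_def, folded u_def, folded \<eta>_def \<delta>_def]
  have RM: "\<rho> ^ M = R" unfolding R_def M_def ..
  have hs: "hullsetup d I (\<lambda>j. ln (x j)) L r \<delta> \<eta> (sch_E N d \<rho>) (ln \<rho>)"
  proof
    show "I \<subseteq> {0..d}" unfolding I_def by auto
    show "0 \<in> I" unfolding I_def by simp
    show "d \<in> I" unfolding I_def by simp
    show "ln (x j) \<le> ln (x k)" if "1 \<le> j" "j \<le> k" "k \<le> d" for j k
      using xmono[OF that] xpos[of j] that by simp
    show "L (Suc k) = L k + ln (x (Suc k))" if "k < d" for k
    proof -
      have "{k<..d} = insert (Suc k) {Suc k<..d}" using that by auto
      then show ?thesis unfolding L_def by simp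
    qed
    show "k \<in> I \<longleftrightarrow> ln (x k) < ln (x (Suc k))" if "1 \<le> k" "k < d" for k
      using that xpos[of k] xpos[of "Suc k"] unfolding I_def x_def by auto
    show "ln (x (Suc k)) \<ge> ln (x k) + ln \<rho>" if "1 \<le> k" "k < d" "k \<in> I" for k
    proof -
      have "x k < x (Suc k)" using that unfolding I_def x_def by auto
      then have "\<rho> * x k \<le> x (Suc k)" using gap that by simp
      moreover have "0 < \<rho> * x k" using rho1 xpos[of k] that by simp
      ultimately have "ln (\<rho> * x k) \<le> ln (x (Suc k))" by simp
      then show ?thesis using rho1 xpos[of k] that by (simp add: ln_mult)
    qed
    show "\<exists>v. r k = ereal v \<and> \<bar>v - L k\<bar> \<le> \<delta>" if kI: "k \<in> I" for k
    proof -
      have kd: "k \<le> d" using kI d1 unfolding I_def by auto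
      have corner: "k = 0 \<or> k = d \<or> (1 \<le> k \<and> k < d \<and> norm (\<zeta> (Suc k)) \<ge> \<rho> * norm (\<zeta> k))"
        using kI gap unfolding I_def x_def by auto
      have cb: "norm (coeff Pr k - (\<Prod>i\<in>{k<..d}. - (\<zeta> i ^ M))) \<le> 2 ^ d * P k ^ M / \<rho> ^ M"
        unfolding Pr_def P_def x_def
        using coeff_bound_corner[of d \<zeta> k \<rho> M] sorted xpos kd rho1 corner unfolding x_def by simp
      have nm: "norm (\<Prod>i\<in>{k<..d}. - (\<zeta> i ^ M)) = P k ^ M" unfolding P_def x_def by (rule norm_term)
      have cb2: "norm (coeff Pr k - (\<Prod>i\<in>{k<..d}. - (\<zeta> i ^ M))) \<le> u * P k ^ M"
        using cb unfolding RM u_def by simp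
      define Q where "Q = P k ^ M"
      have Qpos: "Q > 0" unfolding Q_def using Ppos by simp
      have lo: "norm (coeff Pr k) \<ge> (1 - u) * Q"
        using norm_triangle_ineq2[of "(\<Prod>i\<in>{k<..d}. - (\<zeta> i ^ M))" "coeff Pr k"] cb2 nm unfolding Q_def
        by (simp add: norm_minus_commute algebra_simps)
      have hi: "norm (coeff Pr k) \<le> (1 + u) * Q"
        using norm_triangle_ineq[of "coeff Pr k - (\<Prod>i\<in>{k<..d}. - (\<zeta> i ^ M))" "(\<Prod>i\<in>{k<..d}. - (\<zeta> i ^ M))"] cb2 nm
        unfolding Q_def by (simp add: algebra_simps)
      have u1: "1 - u > 0" using num(2) by simp
      have nzp: "norm (coeff Pr k) > 0" using lo u1 Qpos by (smt (verit) mult_pos_pos)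
      then have nz: "coeff Pr k \<noteq> 0" by simp
      define \<theta> where "\<theta> = ln (norm (coeff Pr k)) - ln Q"
      have th_lo: "\<theta> \<ge> ln (1 - u)"
      proof -
        have "0 < (1 - u) * Q" using u1 Qpos by simp
        then have "ln ((1 - u) * Q) \<le> ln (norm (coeff Pr k))" using lo nzp by simp
        then show ?thesis unfolding \<theta>_def using u1 Qpos by (simp add: ln_mult)
      qed
      have th_hi: "\<theta> \<le> - ln (1 - u)"
      proof -
        have "ln (norm (coeff Pr k)) \<le> ln ((1 + u) * Q)" by (rule ln_mono2[OF nzp hi])
        then have "\<theta> \<le> ln (1 + u)" unfolding \<theta>_def using num(1) Qpos by (simp add: ln_mult)
        also have "\<dots> \<le> u" using num(1) by (intro ln_add_one_self_le_self) simp
        also have "\<dots> \<le> - ln (1 - u)" using ln_le_minus_one[OF u1] by simp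
        finally show ?thesis .
      qed
      have tha: "\<bar>\<theta>\<bar> \<le> - ln (1 - u)" using th_lo th_hi by linarith
      have "\<bar>\<theta> / Mr\<bar> = \<bar>\<theta>\<bar> / Mr" using Mrpos by simp
      also have "\<dots> \<le> - ln (1 - u) / Mr" using tha Mrpos by (intro divide_right_mono) auto
      finally have "\<bar>\<theta> / Mr\<bar> \<le> \<delta>" unfolding \<delta>_def .
      moreover have "r k = ereal (L k - \<theta> / Mr)" using rval[OF nz] unfolding \<theta>_def Q_def .
      ultimately show ?thesis by (intro exI[of _ "L k - \<theta> / Mr"]) simp
    qed
    show "r k = \<infinity> \<or> (\<exists>v. r k = ereal v \<and> v \<ge> L k - \<eta>)" if kd: "k \<le> d" and kI: "k \<notin> I" for k
    proof (cases "coeff Pr k = 0")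
      case True
      then have "coeff ((graeffe ^^ N) f) k = 0" using gN by simp
      then show ?thesis using r_def[of k] by simp
    next
      case False
      have cb: "norm (coeff Pr k) \<le> 2 ^ d * P k ^ M"
        unfolding Pr_def P_def x_def using coeff_bound_gen[of d \<zeta> M k] sorted by simp
      have nzp: "norm (coeff Pr k) > 0" using False by simp
      have "ln (norm (coeff Pr k)) \<le> ln (2 ^ d * P k ^ M)" by (rule ln_mono2[OF nzp cb])
      also have "\<dots> = real d * ln 2 + ln (P k ^ M)" using Ppos[of k] by (simp add: ln_mult ln_realpow)
      finally have "(ln (norm (coeff Pr k)) - ln (P k ^ M)) / Mr \<le> \<eta>"
        unfolding \<eta>_def using Mrpos by (simp add: divide_right_mono)
      then show ?thesis using rval[OF False] by auto
    qed
    show "\<delta> \<ge> 0" by (rule num(4))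
    show "\<eta> \<ge> 0" by (rule num(3))
    show "sch_E N d \<rho> > 2 * (\<eta> + \<delta>)" by (rule num(5))
    show "sch_E N d \<rho> + \<eta> + 4 * \<delta> \<le> ln \<rho>" by (rule num(6))
  qed
  have "rev (foldl (\<lambda>st i. i # sch_pop (sch_E N d \<rho>) r i st) [0] [1..<Suc d]) = sorted_list_of_set I"
    by (rule hullsetup.result[OF hs])
  then show ?thesis unfolding strict_convex_hull_def I_def by simp
qed


end
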